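(* Assume the standing setting below, and suppose Assumptions (A1), (A2), (A3) hold with $L_Z>0$. Fix $\sigma\in(\lambda,1)$, $\eta^0>0$ and $\omega\in[0,\bar\omega(\sigma))$. Let $\{z^k\}$ be generated by the quantized algorithm (Q-M), where at every iteration $k$ every quantizer $\mathcal Q_i^k$ satisfies the BC-rule with bias $\eta=\eta^0\sigma^k$ and compression rate $\omega$. Then for all $k=0,1,2,\dots$, $$\sqrt{\mathbb E\big[\|z^k-z^\infty\|_2^2\big]}\le V_0\,\sigma^k,$$ where $$V_0=\max\{c^*,\|z^0-z^\infty\|\}+\frac{L_A\psi\sqrt{md}\,R^2\eta^0}{\sigma-\lambda}\cdot\frac{1+\frac{R\omega}{\sigma}\big[(1+L_C\sigma)\psi-1\big]}{1-\omega/\bar\omega(\sigma)},$$ with $\psi=\max\{1,(2L_C)^{R-1}\}$ and $c^*=\frac{1}{L_Z}\max_{s\in[R]}\|\mathcal C^s(z^0,0)\|_2$.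
   Context: Standing setting. Let $m,d,R\ge 1$ be integers, $p\ge1$, and $\mathcal Z\subseteq\mathbb R^p$. Let $\mathcal C^s:\mathcal Z\times\mathbb R^{md}\to\mathbb R^{md}$ for $s\in[R]=\{1,\dots,R\}$ and $\mathcal A:\mathcal Z\times(\mathbb R^{md})^R\to\mathcal Z$. Define $\tilde{\mathcal A}:\mathcal Z\to\mathcal Z$ by $\tilde{\mathcal A}(z)=\mathcal A(z,c^1(z),\dots,c^R(z))$ where $c^0(z)=0$ and $c^s(z)=\mathcal C^s(z,c^{s-1}(z))$. (A1) $\tilde{\mathcal A}$ has a fixed point $z^\infty\in\mathcal Z$, and there are $\lambda\in(0,1)$ and a norm $\|\cdot\|$ on $\mathbb R^p$ with $\|\cdot\|_2\le\|\cdot\|$ such that $\|\tilde{\mathcal A}(z)-z^\infty\|\le\lambda\|z-z^\infty\|$ for all $z\in\mathcal Z$. (A2) There is $L_A\ge0$ such that for every $s\in[R]$, $\|\mathcal A(z,c^1,\dots,c^s,\dots,c^R)-\mathcal A(z,c^1,\dots,\tilde c^s,\dots,c^R)\|\le L_A\|c^s-\tilde c^s\|_2$ for all $z\in\mathcal Z$ and all $c^1,\dots,c^R,\tilde c^s\in\mathbb R^{md}$. (A3) There are $L_C,L_Z\ge0$ such that for all $s\in[R]$: $\|\mathcal C^s(z,c)-\mathcal C^s(z,c')\|_2\le L_C\|c-c'\|_2$ for all $z\in\mathcal Z$, $c,c'\in\mathbb R^{md}$; and $\|\mathcal C^s(z,c)-\mathcal C^s(z',c)\|_2\le L_Z\|z-z'\|_2$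 for all $z,z'\in\mathcal Z$, $c\in\mathbb R^{md}$. Quantized algorithm (Q-M). Vectors in $\mathbb R^{md}$ are written $x=(x_1,\dots,x_m)$ with $x_i\in\mathbb R^d$ (agent $i$'s block). At iteration $k$ each agent $i$ uses a (possibly random) quantizer $\mathcal Q_i^k:\mathbb R^d\to\mathbb R^d$, and $\mathcal Q^k(x)=(\mathcal Q^k_1(x_1),\dots,\mathcal Q^k_m(x_m))$. Start with $z^0\in\mathcal Z$ and $\hat c^{-1,s}=0$ for $s\in[R]$. For $k=0,1,\dots$: set $\hat c^{k,0}=0$; for $s=1,\dots,R$: $c^{k,s}=\mathcal C^s(z^k,\hat c^{k,s-1})$ and $\hat c^{k,s}=\hat c^{k-1,s}+\mathcal Q^k(c^{k,s}-\hat c^{k-1,s})$; then $z^{k+1}=\mathcal A(z^k,\hat c^{k,1},\dots,\hat c^{k,R})$. The randomness of the quantizers is such that each application of a quantizer, conditionally on all previously generated random variables, satisfies the stated BC-rule inequality. BC-rule: a (possibly random) map $\mathcal Q:\mathbb R^d\to\mathbb R^d$ satisfies the biased compression rule with bias $\eta\ge0$ and compression rate $\omega\in[0,1)$ if $\sqrt{\mathbb E[\|\mathcal Q(x)-x\|_2^2]}\le\sqrt d\,\eta+\omega\|x\|_2$ for all $x\in\mathbb R^d$ (for deterministic $\mathcal Q$ the expectation is trivial). Threshold: $\bar\omega(\sigma)=\frac{\sigma}{R}\cdot\frac{\sigma-\lambda}{\sigma-\lambda+2L_AL_Z\big[R\max\{1,(2L_C)^{R-1}\}\big]^2}$. *)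

theory Defs
  imports "HOL-Probability.Probability"
begin

definition is_norm :: "('a::real_vector \<Rightarrow> real) \<Rightarrow> bool" where
  "is_norm N \<longleftrightarrow> (\<forall>x. N x = 0 \<longleftrightarrow> x = 0) \<and> (\<forall>x y. N (x + y) \<le> N x + N y)
     \<and> (\<forall>c x. N (c *\<^sub>R x) = \<bar>c\<bar> * N x)"

primrec cseq :: "(nat \<Rightarrow> 'z \<Rightarrow> 'v \<Rightarrow> 'v) \<Rightarrow> 'z \<Rightarrow> nat \<Rightarrow> ('v::zero)" where
  "cseq C z 0 = 0"
| "cseq C z (Suc s) = C (Suc s) z (cseq C z s)"

text \<open>The composite map A-tilde; the R-tuple (c^1,...,c^R) is a list of length R.\<close>
definition Atil :: "('z \<Rightarrow> ('v::zero) list \<Rightarrow> 'z) \<Rightarrow> (nat \<Rightarrow> 'z \<Rightarrow> 'v \<Rightarrow> 'v) \<Rightarrow> nat \<Rightarrow> 'z \<Rightarrow> 'z::type"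
  where "Atil A C R z = A z (map (cseq C z) [1..<Suc R])"

text \<open>Inner loop of (Q-M) at one iteration: qm_hat C Qk z prev s = hat c^{k,s}, where
  z = z^k, prev s' = hat c^{k-1,s'} and Qk s is the (full-vector) quantizer used at step s.\<close>
primrec qm_hat :: "(nat \<Rightarrow> 'z \<Rightarrow> 'v \<Rightarrow> 'v) \<Rightarrow> (nat \<Rightarrow> 'v \<Rightarrow> 'v) \<Rightarrow> 'z \<Rightarrow> (nat \<Rightarrow> 'v) \<Rightarrow> nat
    \<Rightarrow> ('v::ab_group_add)" where
  "qm_hat C Qk z prev 0 = 0"
| "qm_hat C Qk z prev (Suc s) =
     prev (Suc s) + Qk (Suc s) (C (Suc s) z (qm_hat C Qk z prev s) - prev (Suc s))"

text \<open>State of (Q-M): qm_state ... k = (z^k, (s \<mapsto> hat c^{k-1,s})), with hat c^{-1,s} = 0.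
  Q k s is the full-vector quantizer used at iteration k, inner step s.\<close>
primrec qm_state :: "('z \<Rightarrow> 'v list \<Rightarrow> 'z) \<Rightarrow> (nat \<Rightarrow> 'z \<Rightarrow> 'v \<Rightarrow> 'v) \<Rightarrow> nat
    \<Rightarrow> (nat \<Rightarrow> nat \<Rightarrow> 'v \<Rightarrow> 'v) \<Rightarrow> 'z \<Rightarrow> nat \<Rightarrow> 'z \<times> (nat \<Rightarrow> ('v::ab_group_add))" where
  "qm_state A C R Q z0 0 = (z0, (\<lambda>s. 0))"
| "qm_state A C R Q z0 (Suc k) =
     (let (z, prev) = qm_state A C R Q z0 k; h = qm_hat C (Q k) z prev
      in (A z (map h [1..<Suc R]), h))"

definition qm_z where "qm_z A C R Q z0 k = fst (qm_state A C R Q z0 k)"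

text \<open>The quantizer input at iteration k, step s (s \<ge> 1): c^{k,s} - hat c^{k-1,s}.\<close>
definition qm_input where
  "qm_input A C R Q z0 k s =
     (let (z, prev) = qm_state A C R Q z0 k
      in C s z (qm_hat C (Q k) z prev (s - 1)) - prev s)"

definition blockQ :: "('m \<Rightarrow> real^'d \<Rightarrow> real^'d) \<Rightarrow> real^'d^'m \<Rightarrow> real^'d^'m" where
  "blockQ Qi x = (\<chi> i. Qi i (x $ i))"

definition psi :: "nat \<Rightarrow> real \<Rightarrow> real" where
  "psi R LC = max 1 ((2 * LC) ^ (R - 1))"

definition omega_bar :: "nat \<Rightarrow> real \<Rightarrow> real \<Rightarrow> real \<Rightarrow> real \<Rightarrow> real \<Rightarrow> real" where
  "omega_bar R lam LA LC LZ \<sigma> =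
     (\<sigma> / real R) * ((\<sigma> - lam) / (\<sigma> - lam + 2 * LA * LZ * (real R * psi R LC)^2))"

end

theory Submission
  imports Defs
begin



definition l2 :: "'a measure \<Rightarrow> ('a \<Rightarrow> real) \<Rightarrow> ennreal" where
  "l2 M f = (\<integral>\<^sup>+ \<omega>. ennreal ((f \<omega>)^2) \<partial>M)"

definition bnd :: "'a measure \<Rightarrow> ('a \<Rightarrow> real) \<Rightarrow> real \<Rightarrow> bool" where
  "bnd M f b \<longleftrightarrow> f \<in> borel_measurable M \<and> (\<forall>\<omega>. 0 \<le> f \<omega>) \<and> 0 \<le> b \<and> l2 M f \<le> ennreal (b^2)"

lemma bnd_mono_bound: "bnd M f b \<Longrightarrow> b \<le> b' \<Longrightarrow> bnd M f b'"
  unfolding bnd_def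
  by (meson dual_order.trans ennreal_leI order.trans power_mono)

lemma bnd_dom:
  assumes "g \<in> borel_measurable M" "\<And>\<omega>. 0 \<le> g \<omega>" "\<And>\<omega>. g \<omega> \<le> f \<omega>" "bnd M f b"
  shows "bnd M g b"
proof -
  have "l2 M g \<le> l2 M f" unfolding l2_def
    by (intro nn_integral_mono ennreal_leI power_mono) (use assms in auto)
  then show ?thesis using assms unfolding bnd_def by auto
qed

lemma l2_zero_AE:
  assumes "f \<in> borel_measurable M" "l2 M f \<le> ennreal 0"
  shows "AE \<omega> in M. f \<omega> = 0"
proof -
  have "l2 M f = 0" using assms(2) by simp
  then have "AE \<omega> in M. ennreal ((f \<omega>)^2) = 0"
    unfolding l2_def using assms(1) by (subst nn_integral_0_iff_AE[symmetric]) auto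
  then show ?thesis by eventually_elim simp
qed

lemma bnd_add:
  assumes f: "bnd M f b" and g: "bnd M g c"
  shows "bnd M (\<lambda>\<omega>. f \<omega> + g \<omega>) (b + c)"
proof -
  have fm: "f \<in> borel_measurable M" and f0: "\<And>\<omega>. 0 \<le> f \<omega>" and b0: "0 \<le> b" and lf: "l2 M f \<le> ennreal (b^2)"
    using f unfolding bnd_def by auto
  have gm: "g \<in> borel_measurable M" and g0: "\<And>\<omega>. 0 \<le> g \<omega>" and c0: "0 \<le> c" and lg: "l2 M g \<le> ennreal (c^2)"
    using g unfolding bnd_def by auto
  have "l2 M (\<lambda>\<omega>. f \<omega> + g \<omega>) \<le> ennreal ((b+c)^2)"
  proof (cases "b = 0")
    case True
    then have "AE \<omega> in M. f \<omega> = 0" using l2_zero_AE[OF fm] lf by simp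
    then have "AE \<omega> in M. ennreal ((f \<omega> + g \<omega>)^2) = ennreal ((g \<omega>)^2)" by eventually_elim simp
    then have "l2 M (\<lambda>\<omega>. f \<omega> + g \<omega>) = l2 M g" unfolding l2_def by (rule nn_integral_cong_AE)
    then show ?thesis using lg True by simp
  next
    case bn0: False
    show ?thesis
    proof (cases "c = 0")
      case True
      then have "AE \<omega> in M. g \<omega> = 0" using l2_zero_AE[OF gm] lg by simp
      then have "AE \<omega> in M. ennreal ((f \<omega> + g \<omega>)^2) = ennreal ((f \<omega>)^2)" by eventually_elim simp
      then have "l2 M (\<lambda>\<omega>. f \<omega> + g \<omega>) = l2 M f" unfolding l2_def by (rule nn_integral_cong_AE)
      then show ?thesis using lf True by simp
    next
      case False
      have bp: "b > 0" using b0 bn0 by simp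
      have cp: "c > 0" using c0 False by simp
      define p where "p = 1 + c / b"
      define q where "q = 1 + b / c"
      have p0: "p \<ge> 0" "q \<ge> 0" using bp cp unfolding p_def q_def by auto
      have pw: "(f \<omega> + g \<omega>)^2 \<le> p * (f \<omega>)^2 + q * (g \<omega>)^2" for \<omega>
      proof -
        have "0 \<le> (c * f \<omega> - b * g \<omega>)^2" by simp
        then have "2 * (b*c) * (f \<omega> * g \<omega>) \<le> c^2 * (f \<omega>)^2 + b^2 * (g \<omega>)^2"
          by (simp add: power2_eq_square algebra_simps)
        then have "2 * (f \<omega> * g \<omega>) \<le> (c/b) * (f \<omega>)^2 + (b/c) * (g \<omega>)^2"
          using bp cp by (simp add: field_simps power2_eq_square)
        then show ?thesis unfolding p_def q_def by (simp add: power2_eq_square algebra_simps)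
      qed
      have "l2 M (\<lambda>\<omega>. f \<omega> + g \<omega>) \<le> (\<integral>\<^sup>+ \<omega>. ennreal p * ennreal ((f \<omega>)^2) + ennreal q * ennreal ((g \<omega>)^2) \<partial>M)"
        unfolding l2_def
        by (intro nn_integral_mono) (use pw p0 in \<open>simp add: ennreal_mult[symmetric] ennreal_plus[symmetric] del: ennreal_plus\<close>)
      also have "\<dots> = ennreal p * l2 M f + ennreal q * l2 M g"
        unfolding l2_def using fm gm
        by (subst nn_integral_add) (auto simp: nn_integral_cmult)
      also have "\<dots> \<le> ennreal p * ennreal (b^2) + ennreal q * ennreal (c^2)"
        by (intro add_mono mult_left_mono lf lg) auto
      also have "\<dots> = ennreal (p * b^2 + q * c^2)"
        using p0 by (simp add: ennreal_mult[symmetric] ennreal_plus[symmetric] del: ennreal_plus)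
      also have "p * b^2 + q * c^2 = (b+c)^2"
        unfolding p_def q_def using bp cp by (simp add: field_simps power2_eq_square)
      finally show ?thesis .
    qed
  qed
  then show ?thesis unfolding bnd_def using fm gm f0 g0 b0 c0 by (auto intro: add_nonneg_nonneg)
qed

lemma bnd_scale:
  assumes "bnd M f b" "0 \<le> a"
  shows "bnd M (\<lambda>\<omega>. a * f \<omega>) (a * b)"
proof -
  have fm: "f \<in> borel_measurable M" and lf: "l2 M f \<le> ennreal (b^2)" using assms unfolding bnd_def by auto
  have "l2 M (\<lambda>\<omega>. a * f \<omega>) = ennreal (a^2) * l2 M f"
    unfolding l2_def using fm
    by (subst nn_integral_cmult[symmetric]) (auto simp: ennreal_mult[symmetric] power_mult_distrib)
  also have "\<dots> \<le> ennreal (a^2) * ennreal (b^2)" by (intro mult_left_mono lf) auto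
  also have "\<dots> = ennreal ((a*b)^2)" by (simp add: ennreal_mult[symmetric] power_mult_distrib)
  finally show ?thesis using assms unfolding bnd_def by auto
qed

lemma bnd_const:
  assumes "prob_space M" "0 \<le> c"
  shows "bnd M (\<lambda>\<omega>. c) c"
proof -
  interpret prob_space M by fact
  have "l2 M (\<lambda>\<omega>. c) = ennreal (c^2)" unfolding l2_def by (simp add: emeasure_space_1)
  then show ?thesis using assms unfolding bnd_def by auto
qed

lemma bnd_sum:
  assumes "finite I" "\<And>i. i \<in> I \<Longrightarrow> bnd M (f i) (b i)" "prob_space M"
  shows "bnd M (\<lambda>\<omega>. \<Sum>i\<in>I. f i \<omega>) (\<Sum>i\<in>I. b i)"
  using assms(1,2)
proof (induction I rule: finite_induct)
  case empty then show ?case using bnd_const[OF assms(3), of 0] by simp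
next
  case (insert x F)
  then show ?case by (simp add: bnd_add)
qed




definition hq where "hq A C R Q z0 k = qm_hat C (Q k) (qm_z A C R Q z0 k) (snd (qm_state A C R Q z0 k))"
definition eq where "eq A C R Q z0 k s = Q k s (qm_input A C R Q z0 k s) - qm_input A C R Q z0 k s"

lemma qm_z_0: "qm_z A C R Q z0 0 = z0" by (simp add: qm_z_def)

lemma qm_z_Suc: "qm_z A C R Q z0 (Suc k) = A (qm_z A C R Q z0 k) (map (hq A C R Q z0 k) [1..<Suc R])"
  by (simp add: qm_z_def hq_def case_prod_beta Let_def)

lemma prev_0: "snd (qm_state A C R Q z0 0) = (\<lambda>s. 0)" by simp

lemma prev_Suc: "snd (qm_state A C R Q z0 (Suc k)) = hq A C R Q z0 k"
  by (simp add: qm_z_def hq_def case_prod_beta Let_def)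

lemma qm_input_eq: "qm_input A C R Q z0 k s =
   C s (qm_z A C R Q z0 k) (hq A C R Q z0 k (s - 1)) - snd (qm_state A C R Q z0 k) s"
  by (simp add: qm_input_def qm_z_def hq_def case_prod_beta)

lemma hq_0: "hq A C R Q z0 k 0 = 0" by (simp add: hq_def)

lemma hq_Suc1: "hq A C R Q z0 k (Suc s) = snd (qm_state A C R Q z0 k) (Suc s) + qm_input A C R Q z0 k (Suc s) + eq A C R Q z0 k (Suc s)"
  by (simp add: hq_def eq_def qm_input_eq[unfolded hq_def])

lemma hq_Suc2: "hq A C R Q z0 k (Suc s) = C (Suc s) (qm_z A C R Q z0 k) (hq A C R Q z0 k s) + eq A C R Q z0 k (Suc s)"
  using hq_Suc1[of A C R Q z0 k s] qm_input_eq[of A C R Q z0 k "Suc s"] by simp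

lemma hq0_Suc: "hq A C R Q z0 0 (Suc s) = qm_input A C R Q z0 0 (Suc s) + eq A C R Q z0 0 (Suc s)"
  using hq_Suc1[of A C R Q z0 0 s] by simp

lemma hq_diff_Suc: "hq A C R Q z0 (Suc k) (Suc s) - hq A C R Q z0 k (Suc s) =
   qm_input A C R Q z0 (Suc k) (Suc s) + eq A C R Q z0 (Suc k) (Suc s)"
  using hq_Suc1[of A C R Q z0 "Suc k" s] prev_Suc[of A C R Q z0 k] by simp

lemma qm_input_0: "qm_input A C R Q z0 0 s = C s z0 (hq A C R Q z0 0 (s - 1))"
  by (simp add: qm_input_eq qm_z_0)

lemma qm_input_Suc: "qm_input A C R Q z0 (Suc k) s =
   C s (qm_z A C R Q z0 (Suc k)) (hq A C R Q z0 (Suc k) (s - 1)) - hq A C R Q z0 k s"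
  by (simp only: qm_input_eq prev_Suc)

lemma qm_z_in:
  assumes "\<forall>z\<in>Z. \<forall>cs. length cs = R \<longrightarrow> A z cs \<in> Z" "z0 \<in> Z"
  shows "qm_z A C R Q z0 k \<in> Z"
  by (induction k) (use assms in \<open>auto simp: qm_z_0 qm_z_Suc\<close>)




lemma nrm_tri: "is_norm N \<Longrightarrow> N (x + y) \<le> N x + N y" unfolding is_norm_def by blast
lemma nrm_scale: "is_norm N \<Longrightarrow> N (c *\<^sub>R x) = \<bar>c\<bar> * N x" unfolding is_norm_def by blast
lemma nrm_minus: "is_norm N \<Longrightarrow> N (- x) = N x"
  using nrm_scale[of N "-1" x] by simp
lemma nrm_nonneg: "is_norm N \<Longrightarrow> 0 \<le> N x"
proof -
  assume n: "is_norm N"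
  have "N (x + - x) \<le> N x + N (-x)" by (rule nrm_tri[OF n])
  moreover have "N 0 = 0" using n unfolding is_norm_def by blast
  ultimately show ?thesis using nrm_minus[OF n] by simp
qed
lemma nrm_diff_tri: "is_norm N \<Longrightarrow> N (a - c) \<le> N (a - b) + N (b - c)"
  using nrm_tri[of N "a - b" "b - c"] by simp
lemma nrm_commute: "is_norm N \<Longrightarrow> N (a - b) = N (b - a)"
  using nrm_minus[of N "a - b"] by simp

lemma A_list_lip:
  assumes n: "is_norm N"
    and A2: "\<forall>z\<in>Z. \<forall>cs s c'. length cs = R \<longrightarrow> s \<in> {1..R} \<longrightarrow>
          N (A z cs - A z (cs[s - 1 := c'])) \<le> LA * norm (cs ! (s - 1) - c')"
    and z: "z \<in> Z" and l: "length cs = R" "length cs' = R"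
  shows "N (A z cs - A z cs') \<le> LA * (\<Sum>i<R. norm (cs ! i - cs' ! i))"
proof -
  define mix where "mix j = map (\<lambda>i. if i < j then cs' ! i else cs ! i) [0..<R]" for j
  have lm: "length (mix j) = R" for j unfolding mix_def by simp
  have m0: "mix 0 = cs" unfolding mix_def using l by (intro nth_equalityI) auto
  have mR: "mix R = cs'" unfolding mix_def using l by (intro nth_equalityI) auto
  have "j \<le> R \<longrightarrow> N (A z cs - A z (mix j)) \<le> LA * (\<Sum>i<j. norm (cs ! i - cs' ! i))" for j
  proof (induction j)
    case 0
    have "N 0 = 0" using n unfolding is_norm_def by blast
    then show ?case using m0 by simp
  next
    case (Suc j)
    show ?case
    proof
      assume j: "Suc j \<le> R"
      have ms: "mix (Suc j) = (mix j)[j := cs' ! j]"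
        unfolding mix_def using j by (intro nth_equalityI) (auto simp: nth_list_update)
      have "N (A z (mix j) - A z (mix (Suc j))) \<le> LA * norm (mix j ! j - cs' ! j)"
        using A2 z lm j unfolding ms by (metis atLeastAtMost_iff diff_Suc_1 le_add1 plus_1_eq_Suc)
      also have "mix j ! j = cs ! j" unfolding mix_def using j by simp
      finally have step: "N (A z (mix j) - A z (mix (Suc j))) \<le> LA * norm (cs ! j - cs' ! j)" .
      have "N (A z cs - A z (mix (Suc j))) \<le> N (A z cs - A z (mix j)) + N (A z (mix j) - A z (mix (Suc j)))"
        by (rule nrm_diff_tri[OF n])
      also have "\<dots> \<le> LA * (\<Sum>i<j. norm (cs ! i - cs' ! i)) + LA * norm (cs ! j - cs' ! j)"
        using Suc j step by simp
      finally show "N (A z cs - A z (mix (Suc j))) \<le> LA * (\<Sum>i<Suc j. norm (cs ! i - cs' ! i))"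
        by (simp add: distrib_left)
    qed
  qed
  from this[of R] show ?thesis using mR by simp
qed

lemma D3:
  assumes Clip: "\<forall>s\<in>{1..R}. \<forall>z\<in>Z. \<forall>c c'. norm (C s z c - C s z c') \<le> LC * norm (c - c')"
    and LC: "LC \<ge> 0"
    and zZ: "qm_z A C R Q z0 k \<in> Z"
  shows "s \<le> R \<Longrightarrow> norm (hq A C R Q z0 k s - cseq C (qm_z A C R Q z0 k) s)
     \<le> (\<Sum>t\<in>{1..s}. LC^(s-t) * norm (eq A C R Q z0 k t))"
proof (induction s)
  case 0 then show ?case by (simp add: hq_0)
next
  case (Suc s)
  let ?z = "qm_z A C R Q z0 k"
  let ?h = "hq A C R Q z0 k" and ?c = "cseq C ?z" and ?e = "eq A C R Q z0 k"
  have "?h (Suc s) - ?c (Suc s) = (C (Suc s) ?z (?h s) - C (Suc s) ?z (?c s)) + ?e (Suc s)"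
    by (simp add: hq_Suc2)
  then have "norm (?h (Suc s) - ?c (Suc s)) \<le> norm (C (Suc s) ?z (?h s) - C (Suc s) ?z (?c s)) + norm (?e (Suc s))"
    by (metis norm_triangle_ineq)
  also have "\<dots> \<le> LC * norm (?h s - ?c s) + norm (?e (Suc s))"
    using Clip zZ Suc.prems by auto
  also have "\<dots> \<le> LC * (\<Sum>t\<in>{1..s}. LC^(s-t) * norm (?e t)) + norm (?e (Suc s))"
    using Suc LC by (simp add: mult_left_mono)
  also have "\<dots> = (\<Sum>t\<in>{1..Suc s}. LC^(Suc s-t) * norm (?e t))"
  proof -
    have "LC * (\<Sum>t\<in>{1..s}. LC^(s-t) * norm (?e t)) = (\<Sum>t\<in>{1..s}. LC^(Suc s-t) * norm (?e t))"
      by (simp add: sum_distrib_left Suc_diff_le mult.assoc)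
    then show ?thesis by simp
  qed
  finally show ?case .
qed

lemma D2:
  assumes n: "is_norm N"
    and A2: "\<forall>z\<in>Z. \<forall>cs s c'. length cs = R \<longrightarrow> s \<in> {1..R} \<longrightarrow>
          N (A z cs - A z (cs[s - 1 := c'])) \<le> LA * norm (cs ! (s - 1) - c')"
    and contr: "\<forall>z\<in>Z. N (Atil A C R z - zinf) \<le> lam * N (z - zinf)"
    and zZ: "qm_z A C R Q z0 k \<in> Z"
  shows "N (qm_z A C R Q z0 (Suc k) - zinf) \<le> lam * N (qm_z A C R Q z0 k - zinf)
     + LA * (\<Sum>s\<in>{1..R}. norm (hq A C R Q z0 k s - cseq C (qm_z A C R Q z0 k) s))"
proof -
  let ?z = "qm_z A C R Q z0 k"
  let ?cs = "map (hq A C R Q z0 k) [1..<Suc R]" and ?cs' = "map (cseq C ?z) [1..<Suc R]"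
  have "N (A ?z ?cs - A ?z ?cs') \<le> LA * (\<Sum>i<R. norm (?cs ! i - ?cs' ! i))"
    by (rule A_list_lip[OF n A2 zZ]) auto
  also have "(\<Sum>i<R. norm (?cs ! i - ?cs' ! i)) = (\<Sum>i<R. norm (hq A C R Q z0 k (Suc i) - cseq C ?z (Suc i)))"
    by (intro sum.cong refl) (simp del: upt_Suc)
  also have "\<dots> = (\<Sum>s\<in>{1..R}. norm (hq A C R Q z0 k s - cseq C ?z s))"
    by (rule sum_bounds_lt_plus1)
  finally have a: "N (A ?z ?cs - A ?z ?cs') \<le> LA * (\<Sum>s\<in>{1..R}. norm (hq A C R Q z0 k s - cseq C ?z s))" .
  have "N (A ?z ?cs - zinf) \<le> N (A ?z ?cs - A ?z ?cs') + N (A ?z ?cs' - zinf)"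
    by (rule nrm_diff_tri[OF n])
  moreover have "N (A ?z ?cs' - zinf) \<le> lam * N (?z - zinf)"
    using contr zZ unfolding Atil_def by auto
  ultimately show ?thesis using a by (simp add: qm_z_Suc)
qed

lemma norm3: "norm (a + b - c) \<le> norm a + norm b + norm (c::'a::real_normed_vector)"
  using norm_triangle_ineq4[of "a + b" c] norm_triangle_ineq[of a b] by linarith

lemma D4:
  assumes Clip: "\<forall>s\<in>{1..R}. \<forall>z\<in>Z. \<forall>c c'. norm (C s z c - C s z c') \<le> LC * norm (c - c')"
    and Zlip: "\<forall>s\<in>{1..R}. \<forall>z\<in>Z. \<forall>z'\<in>Z. \<forall>c. norm (C s z c - C s z' c) \<le> LZ * norm (z - z')"
    and z1: "qm_z A C R Q z0 (Suc k) \<in> Z" and z2: "qm_z A C R Q z0 k \<in> Z"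
    and s: "s \<in> {1..R}"
  shows "norm (qm_input A C R Q z0 (Suc k) s) \<le> LZ * norm (qm_z A C R Q z0 (Suc k) - qm_z A C R Q z0 k)
     + LC * norm (hq A C R Q z0 (Suc k) (s - 1) - hq A C R Q z0 k (s - 1)) + norm (eq A C R Q z0 k s)"
proof -
  obtain s' where s': "s = Suc s'" using s by (cases s) auto
  let ?z' = "qm_z A C R Q z0 (Suc k)" and ?z = "qm_z A C R Q z0 k"
  let ?h' = "hq A C R Q z0 (Suc k) s'" and ?h = "hq A C R Q z0 k s'"
  have "qm_input A C R Q z0 (Suc k) s = (C s ?z' ?h' - C s ?z ?h') + (C s ?z ?h' - C s ?z ?h) - eq A C R Q z0 k s"
    unfolding qm_input_Suc s' by (simp add: hq_Suc2)
  then have "norm (qm_input A C R Q z0 (Suc k) s) \<le> norm (C s ?z' ?h' - C s ?z ?h') + norm (C s ?z ?h' - C s ?z ?h) + norm (eq A C R Q z0 k s)"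
    using norm3[of "C s ?z' ?h' - C s ?z ?h'" "C s ?z ?h' - C s ?z ?h" "eq A C R Q z0 k s"] by simp
  also have "\<dots> \<le> LZ * norm (?z' - ?z) + LC * norm (?h' - ?h) + norm (eq A C R Q z0 k s)"
    using Clip Zlip z1 z2 s by (intro add_mono) auto
  finally show ?thesis using s' by simp
qed

lemma D5:
  assumes Clip: "\<forall>s\<in>{1..R}. \<forall>z\<in>Z. \<forall>c c'. norm (C s z c - C s z c') \<le> LC * norm (c - c')"
    and z0: "z0 \<in> Z" and s: "s \<in> {1..R}"
  shows "norm (qm_input A C R Q z0 0 s) \<le> norm (C s z0 0) + LC * norm (hq A C R Q z0 0 (s - 1))"
proof -
  have "norm (qm_input A C R Q z0 0 s) \<le> norm (C s z0 0) + norm (C s z0 (hq A C R Q z0 0 (s - 1)) - C s z0 0)"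
    unfolding qm_input_0 by (metis add.commute diff_add_cancel norm_triangle_ineq)
  also have "\<dots> \<le> norm (C s z0 0) + LC * norm (hq A C R Q z0 0 (s - 1))"
    using Clip z0 s by (metis add_left_mono diff_zero)
  finally show ?thesis .
qed




lemma norm_vec_sq: "norm (x :: 'a::real_normed_vector ^'n) = sqrt (\<Sum>i\<in>UNIV. (norm (x $ i))^2)"
  by (simp add: norm_vec_def L2_set_def)

lemma norm_vec_sq2: "(norm (x :: 'a::real_normed_vector ^'n))^2 = (\<Sum>i\<in>UNIV. (norm (x $ i))^2)"
  unfolding norm_vec_sq by (simp add: sum_nonneg)

lemma nrm_bounded:
  assumes n: "is_norm N"
  shows "\<exists>B\<ge>0. \<forall>x::'a::euclidean_space. N x \<le> B * norm x"
proof -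
  define B where "B = (\<Sum>b\<in>Basis. N (b::'a))"
  have B0: "B \<ge> 0" unfolding B_def by (intro sum_nonneg) (simp add: nrm_nonneg[OF n])
  have sumtri: "N (\<Sum>b\<in>S. f b) \<le> (\<Sum>b\<in>S. N (f b))" if "finite S" for S and f :: "'a \<Rightarrow> 'a"
    using that
  proof (induction S rule: finite_induct)
    case empty
    have "N 0 = 0" using n unfolding is_norm_def by blast
    then show ?case by simp
  next
    case (insert x F)
    then show ?case using nrm_tri[OF n, of "f x" "sum f F"] by simp
  qed
  have "N x \<le> B * norm x" for x :: 'a
  proof -
    have "N x = N (\<Sum>b\<in>Basis. (x \<bullet> b) *\<^sub>R b)" by (simp add: euclidean_representation)
    also have "\<dots> \<le> (\<Sum>b\<in>Basis. N ((x \<bullet> b) *\<^sub>R b))" by (rule sumtri) simp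
    also have "\<dots> = (\<Sum>b\<in>Basis. \<bar>x \<bullet> b\<bar> * N b)" by (simp add: nrm_scale[OF n])
    also have "\<dots> \<le> (\<Sum>b\<in>Basis. norm x * N b)"
      by (intro sum_mono mult_right_mono) (auto simp: Basis_le_norm nrm_nonneg[OF n])
    also have "\<dots> = B * norm x" unfolding B_def by (simp add: sum_distrib_left mult.commute)
    finally show ?thesis .
  qed
  then show ?thesis using B0 by blast
qed

lemma nrm_continuous:
  assumes n: "is_norm N"
  shows "continuous_on UNIV (N :: 'a::euclidean_space \<Rightarrow> real)"
proof -
  obtain B where B: "B \<ge> 0" "\<forall>x::'a. N x \<le> B * norm x" using nrm_bounded[OF n] by blast
  have "B-lipschitz_on UNIV N"
  proof (rule lipschitz_onI)
    fix x y :: 'a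
    have "N x \<le> N y + N (x - y)" using nrm_tri[OF n, of y "x - y"] by simp
    moreover have "N y \<le> N x + N (y - x)" using nrm_tri[OF n, of x "y - x"] by simp
    moreover have "N (y - x) = N (x - y)" by (rule nrm_commute[OF n])
    ultimately have "\<bar>N x - N y\<bar> \<le> N (x - y)" by linarith
    also have "\<dots> \<le> B * norm (x - y)" using B by blast
    finally show "dist (N x) (N y) \<le> B * dist x y" by (simp add: dist_real_def dist_norm)
  qed (use B in auto)
  then show ?thesis by (rule lipschitz_on_continuous_on)
qed

lemma nrm_measurable:
  assumes n: "is_norm N" and f: "f \<in> borel_measurable M"
  shows "(\<lambda>\<omega>. N (f \<omega> - (c :: 'b::euclidean_space))) \<in> borel_measurable M"
proof -
  have "N \<in> borel_measurable borel" by (rule borel_measurable_continuous_onI[OF nrm_continuous[OF n]])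
  moreover have "(\<lambda>\<omega>. f \<omega> - c) \<in> borel_measurable M" using f by measurable
  ultimately show ?thesis by (rule measurable_compose[rotated])
qed

lemma vec_norm_meas:
  fixes X :: "'a \<Rightarrow> 'b::real_normed_vector ^'m"
  assumes "\<And>i. (\<lambda>\<omega>. norm (X \<omega> $ i)) \<in> borel_measurable M"
  shows "(\<lambda>\<omega>. norm (X \<omega>)) \<in> borel_measurable M"
  unfolding norm_vec_sq using assms by measurable

lemma bc_bound:
  fixes Qi :: "'m::finite \<Rightarrow> 'a \<Rightarrow> real^'d \<Rightarrow> real^'d" and X :: "'a \<Rightarrow> real^'d^'m"
  assumes prob: "prob_space M" and sub: "subalgebra M F"
    and Xm: "\<forall>i. (\<lambda>\<omega>. X \<omega> $ i) \<in> borel_measurable F"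
    and BC: "\<forall>i. \<forall>X \<in> borel_measurable F. (\<lambda>\<omega>. Qi i \<omega> (X \<omega>)) \<in> borel_measurable M \<and>
        (AE \<omega> in M. nn_cond_exp M F (\<lambda>\<omega>'. ennreal ((norm (Qi i \<omega>' (X \<omega>') - X \<omega>'))^2)) \<omega>
          \<le> ennreal ((sqrt (real CARD('d)) * eta + w * norm (X \<omega>))^2))"
    and b: "bnd M (\<lambda>\<omega>. norm (X \<omega>)) b" and eta: "eta \<ge> 0" and w: "w \<ge> 0"
  shows "bnd M (\<lambda>\<omega>. norm (blockQ (\<lambda>i. Qi i \<omega>) (X \<omega>) - X \<omega>)) (sqrt (real (CARD('m) * CARD('d))) * eta + w * b)"
proof -
  interpret prob_space M by fact
  interpret FS: finite_measure_subalgebra M F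
    by (simp add: finite_measure_subalgebra_def finite_measure_subalgebra_axioms_def sub finite_measure_axioms)
  define a where "a = sqrt (real CARD('d)) * eta"
  have a0: "a \<ge> 0" unfolding a_def using eta by simp
  define Xi where "Xi i = (\<lambda>\<omega>. X \<omega> $ i)" for i
  have XiF: "Xi i \<in> borel_measurable F" for i unfolding Xi_def using Xm by blast
  have XiM: "Xi i \<in> borel_measurable M" for i using measurable_from_subalg[OF sub XiF] .
  have QiM: "(\<lambda>\<omega>. Qi i \<omega> (Xi i \<omega>)) \<in> borel_measurable M" for i using BC XiF by blast
  define Ei where "Ei i \<omega> = norm (Qi i \<omega> (Xi i \<omega>) - Xi i \<omega>)" for i \<omega>
  have EiM: "Ei i \<in> borel_measurable M" for i unfolding Ei_def using QiM XiM by measurable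
  have comp: "(blockQ (\<lambda>i. Qi i \<omega>) (X \<omega>) - X \<omega>) $ i = Qi i \<omega> (Xi i \<omega>) - Xi i \<omega>" for \<omega> i
    unfolding blockQ_def Xi_def by simp
  have eq1: "norm (blockQ (\<lambda>i. Qi i \<omega>) (X \<omega>) - X \<omega>) = sqrt (\<Sum>i\<in>UNIV. (Ei i \<omega>)^2)" for \<omega>
    unfolding norm_vec_sq comp Ei_def ..
  have eM: "(\<lambda>\<omega>. norm (blockQ (\<lambda>i. Qi i \<omega>) (X \<omega>) - X \<omega>)) \<in> borel_measurable M"
    unfolding eq1 using EiM by measurable
  define g where "g \<omega> = norm (\<chi> i. a + w * norm (Xi i \<omega>))" for \<omega>
  have gjM: "(\<lambda>\<omega>. norm (a + w * norm (Xi j \<omega>))) \<in> borel_measurable M" for j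
    using XiM[of j] by measurable
  have gM: "g \<in> borel_measurable M"
    unfolding g_def by (rule vec_norm_meas) (simp only: vec_lambda_beta gjM)
  have g_sq: "(g \<omega>)^2 = (\<Sum>i\<in>UNIV. (a + w * norm (Xi i \<omega>))^2)" for \<omega>
    unfolding g_def norm_vec_sq2 by simp
  have "l2 M (\<lambda>\<omega>. norm (blockQ (\<lambda>i. Qi i \<omega>) (X \<omega>) - X \<omega>)) = (\<integral>\<^sup>+ \<omega>. (\<Sum>i\<in>UNIV. ennreal ((Ei i \<omega>)^2)) \<partial>M)"
    unfolding l2_def eq1 by (simp add: sum_nonneg)
  also have "\<dots> = (\<Sum>i\<in>UNIV. \<integral>\<^sup>+ \<omega>. ennreal ((Ei i \<omega>)^2) \<partial>M)"
    by (rule nn_integral_sum) (use EiM in measurable)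
  also have "\<dots> \<le> (\<Sum>i\<in>UNIV. \<integral>\<^sup>+ \<omega>. ennreal ((a + w * norm (Xi i \<omega>))^2) \<partial>M)"
  proof (rule sum_mono)
    fix i
    have gi: "(\<lambda>\<omega>'. ennreal ((Ei i \<omega>')^2)) \<in> borel_measurable M" using EiM by measurable
    have "(\<integral>\<^sup>+ \<omega>. ennreal ((Ei i \<omega>)^2) \<partial>M) = (\<integral>\<^sup>+ \<omega>. 1 * ennreal ((Ei i \<omega>)^2) \<partial>M)" by simp
    also have "\<dots> = (\<integral>\<^sup>+ \<omega>. 1 * nn_cond_exp M F (\<lambda>\<omega>'. ennreal ((Ei i \<omega>')^2)) \<omega> \<partial>M)"
      by (rule FS.nn_cond_exp_intg[symmetric]) (use gi in auto)
    also have "\<dots> \<le> (\<integral>\<^sup>+ \<omega>. ennreal ((a + w * norm (Xi i \<omega>))^2) \<partial>M)"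
    proof (rule nn_integral_mono_AE)
      have "AE \<omega> in M. nn_cond_exp M F (\<lambda>\<omega>'. ennreal ((norm (Qi i \<omega>' (Xi i \<omega>') - Xi i \<omega>'))^2)) \<omega>
          \<le> ennreal ((sqrt (real CARD('d)) * eta + w * norm (Xi i \<omega>))^2)"
        using BC XiF by blast
      then show "AE \<omega> in M. 1 * nn_cond_exp M F (\<lambda>\<omega>'. ennreal ((Ei i \<omega>')^2)) \<omega> \<le> ennreal ((a + w * norm (Xi i \<omega>))^2)"
        unfolding Ei_def a_def by simp
    qed
    finally show "(\<integral>\<^sup>+ \<omega>. ennreal ((Ei i \<omega>)^2) \<partial>M) \<le> (\<integral>\<^sup>+ \<omega>. ennreal ((a + w * norm (Xi i \<omega>))^2) \<partial>M)" .
  qed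
  also have "\<dots> = (\<integral>\<^sup>+ \<omega>. (\<Sum>i\<in>UNIV. ennreal ((a + w * norm (Xi i \<omega>))^2)) \<partial>M)"
    by (rule nn_integral_sum[symmetric]) (use XiM in measurable)
  also have "\<dots> = l2 M g"
    unfolding l2_def g_sq by (simp add: sum_nonneg)
  finally have l2e: "l2 M (\<lambda>\<omega>. norm (blockQ (\<lambda>i. Qi i \<omega>) (X \<omega>) - X \<omega>)) \<le> l2 M g" .
  have gle: "g \<omega> \<le> sqrt (real CARD('m)) * a + w * norm (X \<omega>)" for \<omega>
  proof -
    have "(\<chi> i. a + w * norm (Xi i \<omega>)) = (\<chi> i. a) + w *\<^sub>R (\<chi> i. norm (Xi i \<omega>))"
      by (simp add: vec_eq_iff)
    then have "g \<omega> \<le> norm (\<chi> i::'m. a) + norm (w *\<^sub>R (\<chi> i. norm (Xi i \<omega>)))"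
      unfolding g_def by (metis norm_triangle_ineq)
    also have "norm (\<chi> i::'m. a) = sqrt (real CARD('m)) * a"
      unfolding norm_vec_sq using a0 by (simp add: real_sqrt_mult)
    also have "norm (w *\<^sub>R (\<chi> i. norm (Xi i \<omega>))) = w * norm (X \<omega>)"
      using w unfolding norm_scaleR by (simp add: norm_vec_sq Xi_def)
    finally show ?thesis .
  qed
  have bb: "bnd M (\<lambda>\<omega>. sqrt (real CARD('m)) * a + w * norm (X \<omega>)) (sqrt (real CARD('m)) * a + w * b)"
    by (intro bnd_add bnd_const bnd_scale prob b w) (use a0 in simp)
  have "bnd M g (sqrt (real CARD('m)) * a + w * b)"
    by (rule bnd_dom[OF gM _ gle bb]) (simp add: g_def)
  then have "l2 M g \<le> ennreal ((sqrt (real CARD('m)) * a + w * b)^2)" unfolding bnd_def by blast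
  moreover have "sqrt (real CARD('m)) * a = sqrt (real (CARD('m) * CARD('d))) * eta"
    unfolding a_def by (simp add: real_sqrt_mult)
  ultimately have "l2 M (\<lambda>\<omega>. norm (blockQ (\<lambda>i. Qi i \<omega>) (X \<omega>) - X \<omega>)) \<le> ennreal ((sqrt (real (CARD('m) * CARD('d))) * eta + w * b)^2)"
    using l2e by simp
  then show ?thesis unfolding bnd_def using eM b w eta by (auto intro!: add_nonneg_nonneg simp: bnd_def)
qed




lemma psi_ge1: "psi R LC \<ge> 1" unfolding psi_def by simp

lemma psi_beta: "LC \<ge> 0 \<Longrightarrow> psi R LC = (max 1 (2*LC))^(R-1)"
proof (cases "2*LC \<le> 1")
  case True
  assume LC: "LC \<ge> 0"
  have "(2*LC)^(R-1) \<le> 1" by (rule power_le_one) (use LC True in auto)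
  then show ?thesis unfolding psi_def using True by (simp add: max_absorb1 del: power_mult_distrib)
next
  case False
  assume LC: "LC \<ge> 0"
  have "1 \<le> (2*LC)^(R-1)" by (rule one_le_power) (use False in auto)
  then show ?thesis unfolding psi_def using False by (simp add: max_absorb2 del: power_mult_distrib)
qed

lemma const_facts:
  fixes R :: nat and lam \<sigma> LA LC LZ w G sq \<eta>0 :: real
  defines "\<psi> \<equiv> psi R LC"
  defines "ob \<equiv> omega_bar R lam LA LC LZ \<sigma>"
  defines "\<epsilon>0 \<equiv> sq * \<eta>0"
  defines "V0 \<equiv> G + (LA * \<psi> * sq * (real R)^2 * \<eta>0 / (\<sigma> - lam))
             * ((1 + (real R * w / \<sigma>) * ((1 + LC * \<sigma>) * \<psi> - 1)) / (1 - w / ob))"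
  defines "W \<equiv> (2 * LZ * V0 + \<epsilon>0 * (1 + LC * \<sigma>)) / (\<sigma> - real R * w)"
  assumes R: "R \<ge> 1" and lam: "0 < lam" and sig: "lam < \<sigma>" "\<sigma> < 1"
    and LA: "LA \<ge> 0" and LC: "LC \<ge> 0" and LZ: "LZ > 0" and w: "0 \<le> w" "w < ob"
    and G: "G \<ge> 0" and sq: "sq \<ge> 0" and eta: "\<eta>0 > 0"
  shows "\<sigma> - real R * w > 0" "W \<ge> 0" "V0 \<ge> G" "w \<le> 1" "\<epsilon>0 \<ge> 0"
    "LZ * V0 + LC * \<epsilon>0 \<le> W"
    "LZ * V0 * (1 + \<sigma>) + LC * \<epsilon>0 * \<sigma> + \<epsilon>0 + real R * w * W \<le> W * \<sigma>"
    "lam * V0 + LA * (real R)^2 * \<psi> * (\<epsilon>0 + w * (real R * W)) \<le> \<sigma> * V0"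
proof -
  have psi1: "\<psi> \<ge> 1" unfolding \<psi>_def by (rule psi_ge1)
  have sp: "\<sigma> > 0" using lam sig by simp
  have sl: "\<sigma> - lam > 0" using sig by simp
  have Rp: "real R > 0" using R by simp
  have e0: "\<epsilon>0 \<ge> 0" unfolding \<epsilon>0_def using sq eta by simp
  define K where "K = LA * (real R)^2 * \<psi> / (\<sigma> - lam)"
  have K0: "K \<ge> 0" unfolding K_def using LA psi1 sl by simp
  define q where "q = real R * w / \<sigma>"
  have q0: "q \<ge> 0" unfolding q_def using w sp by simp
  define D where "D = \<sigma> - lam + 2 * LA * LZ * (real R * \<psi>)^2"
  have Dp: "D > 0" unfolding D_def using sl LA LZ by (simp add: add_pos_nonneg)
  have ob_eq: "ob = (\<sigma> / real R) * ((\<sigma> - lam) / D)"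
    unfolding ob_def omega_bar_def D_def \<psi>_def ..
  have obp: "ob > 0" unfolding ob_eq using sp Rp sl Dp by simp
  have wob: "w / ob = q + 2 * q * LZ * \<psi> * K"
    unfolding ob_eq q_def K_def D_def using sp Rp sl
    by (simp add: field_simps power2_eq_square)
  define T where "T = 1 - w / ob"
  have Tp: "T > 0" unfolding T_def using w obp by simp
  have qK: "2 * q * LZ * \<psi> * K \<ge> 0" using q0 LZ psi1 K0 by simp
  have q1: "q < 1" using Tp qK unfolding T_def wob by linarith
  show sRw: "\<sigma> - real R * w > 0"
  proof -
    have "real R * w < \<sigma>" using q1 sp unfolding q_def by (simp add: field_simps)
    then show ?thesis by simp
  qed
  show "\<epsilon>0 \<ge> 0" by (rule e0)
  define N where "N = 1 + q * ((1 + LC * \<sigma>) * \<psi> - 1)"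
  have N1: "N \<ge> 1 + q * LC * \<sigma>"
  proof -
    have "(1 + LC * \<sigma>) * \<psi> - 1 \<ge> LC * \<sigma>"
      using mult_left_mono[OF psi1, of "1 + LC * \<sigma>"] LC sp by simp
    then have "q * (LC * \<sigma>) \<le> q * ((1 + LC * \<sigma>) * \<psi> - 1)" by (rule mult_left_mono) (rule q0)
    then show ?thesis unfolding N_def by (simp add: mult.assoc)
  qed
  have V0eq: "V0 = G + K * \<epsilon>0 * N / T"
    unfolding V0_def K_def T_def N_def q_def \<epsilon>0_def by (simp add: field_simps)
  have N0: "N \<ge> 0" using N1 q0 LC sp by (smt (verit) mult_nonneg_nonneg)
  have KN: "K * \<epsilon>0 * N / T \<ge> 0" using K0 e0 N0 Tp by simp
  show VG: "V0 \<ge> G" using V0eq KN by simp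
  have V0p: "V0 \<ge> 0" using VG G by simp
  show W0: "W \<ge> 0" unfolding W_def using sRw LZ V0p e0 LC sp by simp
  show "w \<le> 1"
  proof -
    have "(\<sigma> - lam) / D \<le> 1" using Dp LA LZ sl unfolding D_def by simp
    then have "ob \<le> \<sigma> / real R" unfolding ob_eq by (rule mult_left_le) (use sp Rp in auto)
    also have "\<dots> \<le> \<sigma>" using Rp R sp by (simp add: divide_le_eq)
    finally show ?thesis using w sig by simp
  qed
  have Wid: "W * (\<sigma> - real R * w) = 2 * LZ * V0 + \<epsilon>0 * (1 + LC * \<sigma>)"
    unfolding W_def using sRw by simp
  show "LZ * V0 * (1 + \<sigma>) + LC * \<epsilon>0 * \<sigma> + \<epsilon>0 + real R * w * W \<le> W * \<sigma>"
  proof -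
    have "LZ * V0 * (1 + \<sigma>) \<le> (LZ * V0) * 2" by (rule mult_left_mono) (use LZ V0p sig in auto)
    then show ?thesis using Wid by (simp add: algebra_simps)
  qed
  show "LZ * V0 + LC * \<epsilon>0 \<le> W"
  proof -
    have "W * \<sigma> \<ge> W * (\<sigma> - real R * w)" using W0 w Rp by (simp add: mult_left_mono)
    moreover have "2 * LZ * V0 + \<epsilon>0 * (1 + LC * \<sigma>) \<ge> \<sigma> * (LZ * V0 + LC * \<epsilon>0)"
    proof -
      have "\<sigma> * (LZ * V0) \<le> LZ * V0" by (rule mult_left_le_one_le) (use LZ V0p sig sp in auto)
      then have "\<sigma> * (LZ * V0) \<le> 2 * LZ * V0" using LZ V0p by simp
      then show ?thesis using e0 by (simp add: algebra_simps)
    qed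
    ultimately have "\<sigma> * (LZ * V0 + LC * \<epsilon>0) \<le> \<sigma> * W" using Wid by (simp add: mult.commute)
    then show ?thesis using sp by simp
  qed
  show "lam * V0 + LA * (real R)^2 * \<psi> * (\<epsilon>0 + w * (real R * W)) \<le> \<sigma> * V0"
  proof -
    have wRW: "w * (real R * W) = q * (2 * LZ * V0 + \<epsilon>0 * (1 + LC * \<sigma>)) / (1 - q)"
      unfolding W_def q_def using sp sRw by (simp add: field_simps)
    have main: "V0 * (1 - q - 2 * LZ * K * q) \<ge> K * \<epsilon>0 * (1 + q * LC * \<sigma>)"
    proof -
      have "V0 * (1 - q - 2 * LZ * K * q) \<ge> V0 * T"
      proof -
        have "(2 * LZ * K * q) * 1 \<le> (2 * LZ * K * q) * \<psi>" by (rule mult_left_mono) (use psi1 LZ K0 q0 in auto)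
        then have "2 * LZ * K * q \<le> 2 * q * LZ * \<psi> * K" by (simp add: ac_simps)
        then have "1 - q - 2 * LZ * K * q \<ge> T" unfolding T_def wob by simp
        then show ?thesis using V0p by (simp add: mult_left_mono)
      qed
      also have "V0 * T = G * T + K * \<epsilon>0 * N" unfolding V0eq using Tp by (simp add: field_simps)
      also have "\<dots> \<ge> K * \<epsilon>0 * N" using G Tp by simp
      finally have "V0 * (1 - q - 2 * LZ * K * q) \<ge> K * \<epsilon>0 * N" .
      moreover have "K * \<epsilon>0 * N \<ge> K * \<epsilon>0 * (1 + q * LC * \<sigma>)"
        using N1 K0 e0 by (simp add: mult_left_mono)
      ultimately show ?thesis by simp
    qed
    have "V0 \<ge> K * (\<epsilon>0 + w * (real R * W))"
    proof -
      have "K * (\<epsilon>0 + w * (real R * W)) * (1 - q) = K * \<epsilon>0 * (1 - q) + K * q * (2 * LZ * V0 + \<epsilon>0 * (1 + LC * \<sigma>))"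
        unfolding wRW using q1 by (simp add: field_simps)
      also have "\<dots> = K * \<epsilon>0 * (1 + q * LC * \<sigma>) + 2 * LZ * K * q * V0" by (simp add: algebra_simps)
      also have "\<dots> \<le> V0 * (1 - q)" using main by (simp add: algebra_simps)
      finally show ?thesis using q1 by simp
    qed
    then have "(\<sigma> - lam) * V0 \<ge> LA * (real R)^2 * \<psi> * (\<epsilon>0 + w * (real R * W))"
      unfolding K_def using sl by (simp add: field_simps)
    then show ?thesis by (simp add: algebra_simps)
  qed
qed




lemma xnum:
  fixes LZ V0 \<sigma> t LC P s W \<epsilon>0 w \<beta> R :: real
  assumes P: "\<beta> * P \<ge> 1" "P \<ge> 0" and nn: "LZ \<ge> 0" "V0 \<ge> 0" "\<sigma> \<ge> 0" "t \<ge> 0" "LC \<ge> 0" "s \<ge> 0" "W \<ge> 0" "\<epsilon>0 \<ge> 0" "w \<ge> 0"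
    and LCw: "LC * (1 + w) \<le> \<beta>" and sR: "s + 1 \<le> R"
    and c3: "LZ * V0 * (1 + \<sigma>) + LC * \<epsilon>0 * \<sigma> + \<epsilon>0 + R * w * W \<le> W * \<sigma>"
  shows "LZ * (V0 * (\<sigma> * t) + V0 * t) + LC * (P * (s * W) * (\<sigma> * t) + (\<epsilon>0 + w * (P * (s * W))) * (\<sigma> * t))
         + (\<epsilon>0 + w * ((\<beta> * P) * ((s + 1) * W))) * t \<le> (\<beta> * P) * ((s + 1) * W) * (\<sigma> * t)"
proof -
  define Y where "Y = P * s * W * \<sigma> * t"
  have Y0: "Y \<ge> 0" unfolding Y_def using nn P by simp
  define X where "X = LZ * V0 * (1 + \<sigma>) + LC * \<epsilon>0 * \<sigma> + \<epsilon>0"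
  have X0: "X \<ge> 0" unfolding X_def using nn by simp
  have h1: "LC * (P * (s * W) * (\<sigma> * t) + (\<epsilon>0 + w * (P * (s * W))) * (\<sigma> * t)) = (LC * (1 + w)) * Y + LC * \<epsilon>0 * \<sigma> * t"
    unfolding Y_def by (simp add: algebra_simps)
  have h2: "(LC * (1 + w)) * Y \<le> \<beta> * Y" by (rule mult_right_mono[OF LCw Y0])
  have h3: "w * ((\<beta> * P) * ((s + 1) * W)) * t \<le> (\<beta> * P) * (R * w * W * t)"
  proof -
    have "w * ((s + 1) * W) * t \<le> w * (R * W) * t"
      using sR nn by (intro mult_right_mono mult_left_mono) auto
    then have "(\<beta> * P) * (w * ((s + 1) * W) * t) \<le> (\<beta> * P) * (w * (R * W) * t)"
      using P by (intro mult_left_mono) auto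
    then show ?thesis by (simp add: algebra_simps)
  qed
  have h4: "X * t \<le> (\<beta> * P) * (X * t)"
    using mult_right_mono[OF P(1), of "X * t"] X0 nn by simp
  have h5: "(\<beta> * P) * ((X + R * w * W) * t) \<le> (\<beta> * P) * ((W * \<sigma>) * t)"
    using c3 P nn unfolding X_def by (intro mult_left_mono mult_right_mono) auto
  have "LZ * (V0 * (\<sigma> * t) + V0 * t) + LC * (P * (s * W) * (\<sigma> * t) + (\<epsilon>0 + w * (P * (s * W))) * (\<sigma> * t))
         + (\<epsilon>0 + w * ((\<beta> * P) * ((s + 1) * W))) * t
       = X * t + (LC * (1 + w)) * Y + w * ((\<beta> * P) * ((s + 1) * W)) * t"
    unfolding X_def Y_def by (simp add: algebra_simps)
  also have "\<dots> \<le> (\<beta> * P) * (X * t) + \<beta> * Y + (\<beta> * P) * (R * w * W * t)"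
    using h2 h3 h4 by linarith
  also have "\<dots> = (\<beta> * P) * ((X + R * w * W) * t) + \<beta> * Y" by (simp add: algebra_simps)
  also have "\<dots> \<le> (\<beta> * P) * ((W * \<sigma>) * t) + \<beta> * Y" using h5 by linarith
  also have "\<dots> = (\<beta> * P) * ((s + 1) * W) * (\<sigma> * t)" unfolding Y_def by (simp add: algebra_simps)
  finally show ?thesis .
qed

lemma x0num:
  fixes LZ V0 LC P s W \<epsilon>0 w \<beta> :: real
  assumes P: "\<beta> * P \<ge> 1" "P \<ge> 0" and nn: "LZ \<ge> 0" "V0 \<ge> 0" "LC \<ge> 0" "s \<ge> 0" "W \<ge> 0" "\<epsilon>0 \<ge> 0" "w \<ge> 0"
    and LCw: "LC * (1 + w) \<le> \<beta>" and c2: "LZ * V0 + LC * \<epsilon>0 \<le> W"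
  shows "LZ * V0 + LC * (P * (s * W) + (\<epsilon>0 + w * (P * (s * W)))) \<le> (\<beta> * P) * ((s + 1) * W)"
proof -
  define Y where "Y = P * s * W"
  have Y0: "Y \<ge> 0" unfolding Y_def using nn P by simp
  have h1: "LC * (P * (s * W) + (\<epsilon>0 + w * (P * (s * W)))) = (LC * (1 + w)) * Y + LC * \<epsilon>0"
    unfolding Y_def by (simp add: algebra_simps)
  have h2: "(LC * (1 + w)) * Y \<le> \<beta> * Y" by (rule mult_right_mono[OF LCw Y0])
  have h3: "W \<le> (\<beta> * P) * W" using mult_right_mono[OF P(1) nn(5)] by simp
  have "LZ * V0 + LC * (P * (s * W) + (\<epsilon>0 + w * (P * (s * W)))) = (LZ * V0 + LC * \<epsilon>0) + (LC * (1 + w)) * Y"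
    unfolding Y_def by (simp add: algebra_simps)
  also have "\<dots> \<le> (\<beta> * P) * W + \<beta> * Y" using h2 h3 c2 by linarith
  also have "\<dots> = (\<beta> * P) * ((s + 1) * W)" unfolding Y_def by (simp add: algebra_simps)
  finally show ?thesis .
qed


lemma unum:
  fixes LC \<beta> \<epsilon>0 w W \<sigma> :: real and R k :: nat
  assumes LC: "LC \<ge> 0" "LC \<le> \<beta>" and b1: "\<beta> \<ge> 1" and nn: "\<epsilon>0 \<ge> 0" "w \<ge> 0" "W \<ge> 0" "\<sigma> \<ge> 0"
  shows "(\<Sum>s\<in>{1..R}. \<Sum>t\<in>{1..s}. LC^(s-t) * ((\<epsilon>0 + w * (\<beta>^(t-1) * (real t * W))) * \<sigma>^k))
     \<le> (real R)^2 * \<beta>^(R-1) * (\<epsilon>0 + w * (real R * W)) * \<sigma>^k"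
proof -
  define c where "c = \<beta>^(R-1) * (\<epsilon>0 + w * (real R * W)) * \<sigma>^k"
  have c0: "c \<ge> 0" unfolding c_def using b1 nn by simp
  have tb: "LC^(s-t) * ((\<epsilon>0 + w * (\<beta>^(t-1) * (real t * W))) * \<sigma>^k) \<le> c"
    if st: "s \<in> {1..R}" "t \<in> {1..s}" for s t
  proof -
    have pa: "LC^(s-t) \<le> \<beta>^(s-t)" by (rule power_mono) (use LC in auto)
    have a: "LC^(s-t) \<le> \<beta>^(R-1)"
    proof -
      have "\<beta>^(s-t) \<le> \<beta>^(R-1)" by (intro power_increasing) (use st b1 in auto)
      then show ?thesis using pa by linarith
    qed
    have "LC^(s-t) * \<beta>^(t-1) \<le> \<beta>^(s-t) * \<beta>^(t-1)"
      by (rule mult_right_mono[OF pa]) (use b1 in simp)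
    also have "\<dots> = \<beta>^(s-1)" using st by (simp add: power_add[symmetric])
    also have "\<dots> \<le> \<beta>^(R-1)" using st b1 by (intro power_increasing) auto
    finally have b: "LC^(s-t) * \<beta>^(t-1) \<le> \<beta>^(R-1)" .
    have tR: "real t \<le> real R" using st by simp
    have "LC^(s-t) * ((\<epsilon>0 + w * (\<beta>^(t-1) * (real t * W))) * \<sigma>^k)
        = (LC^(s-t) * \<epsilon>0 + (w * W * real t) * (LC^(s-t) * \<beta>^(t-1))) * \<sigma>^k"
      by (simp add: algebra_simps)
    also have "\<dots> \<le> (\<beta>^(R-1) * \<epsilon>0 + (w * W * real R) * \<beta>^(R-1)) * \<sigma>^k"
    proof (rule mult_right_mono[OF add_mono])
      show "LC^(s-t) * \<epsilon>0 \<le> \<beta>^(R-1) * \<epsilon>0" by (rule mult_right_mono[OF a nn(1)])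
      have "(w * W * real t) * (LC^(s-t) * \<beta>^(t-1)) \<le> (w * W * real R) * (LC^(s-t) * \<beta>^(t-1))"
        by (intro mult_right_mono mult_left_mono tR) (use nn LC b1 in auto)
      also have "\<dots> \<le> (w * W * real R) * \<beta>^(R-1)" by (intro mult_left_mono b) (use nn in auto)
      finally show "(w * W * real t) * (LC^(s-t) * \<beta>^(t-1)) \<le> (w * W * real R) * \<beta>^(R-1)" .
    qed (use nn in auto)
    also have "\<dots> = c" unfolding c_def by (simp add: algebra_simps)
    finally show ?thesis .
  qed
  have "(\<Sum>s\<in>{1..R}. \<Sum>t\<in>{1..s}. LC^(s-t) * ((\<epsilon>0 + w * (\<beta>^(t-1) * (real t * W))) * \<sigma>^k))
      \<le> (\<Sum>s\<in>{1..R}. real R * c)"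
  proof (rule sum_mono)
    fix s assume s: "s \<in> {1..R}"
    have "(\<Sum>t\<in>{1..s}. LC^(s-t) * ((\<epsilon>0 + w * (\<beta>^(t-1) * (real t * W))) * \<sigma>^k)) \<le> (\<Sum>t\<in>{1..s}. c)"
      by (rule sum_mono) (rule tb[OF s])
    also have "\<dots> = real s * c" by simp
    also have "\<dots> \<le> real R * c" using s c0 by (intro mult_right_mono) auto
    finally show "(\<Sum>t\<in>{1..s}. LC^(s-t) * ((\<epsilon>0 + w * (\<beta>^(t-1) * (real t * W))) * \<sigma>^k)) \<le> real R * c" .
  qed
  also have "\<dots> = (real R)^2 * \<beta>^(R-1) * (\<epsilon>0 + w * (real R * W)) * \<sigma>^k"
    unfolding c_def by (simp add: power2_eq_square algebra_simps)
  finally show ?thesis .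
qed




theorem theorem2:
  fixes Z :: "(real^'p) set"
    and C :: "nat \<Rightarrow> real^'p \<Rightarrow> real^'d^'m \<Rightarrow> real^'d^'m"
    and A :: "real^'p \<Rightarrow> (real^'d^'m) list \<Rightarrow> real^'p"
    and R :: nat
    and zinf z0 :: "real^'p"
    and nrm :: "real^'p \<Rightarrow> real"
    and lam LA LC LZ \<sigma> \<eta>0 w :: real
    and M :: "'a measure"
    and F :: "nat \<Rightarrow> nat \<Rightarrow> 'a measure"
    and Q :: "nat \<Rightarrow> nat \<Rightarrow> 'm \<Rightarrow> 'a \<Rightarrow> real^'d \<Rightarrow> real^'d"
  defines "Qf \<equiv> (\<lambda>\<omega> k s. blockQ (\<lambda>i. Q k s i \<omega>))"
  assumes R: "R \<ge> 1"
    and A_maps: "\<forall>z\<in>Z. \<forall>cs. length cs = R \<longrightarrow> A z cs \<in> Z"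
    and A1_fix: "zinf \<in> Z" "Atil A C R zinf = zinf"
    and A1_lam: "0 < lam" "lam < 1"
    and A1_norm: "is_norm nrm" "\<forall>x. norm x \<le> nrm x"
    and A1_contr: "\<forall>z\<in>Z. nrm (Atil A C R z - zinf) \<le> lam * nrm (z - zinf)"
    and A2: "LA \<ge> 0"
      "\<forall>z\<in>Z. \<forall>cs s c'. length cs = R \<longrightarrow> s \<in> {1..R} \<longrightarrow>
          nrm (A z cs - A z (cs[s - 1 := c'])) \<le> LA * norm (cs ! (s - 1) - c')"
    and A3: "LC \<ge> 0" "LZ \<ge> 0"
      "\<forall>s\<in>{1..R}. \<forall>z\<in>Z. \<forall>c c'. norm (C s z c - C s z c') \<le> LC * norm (c - c')"
      "\<forall>s\<in>{1..R}. \<forall>z\<in>Z. \<forall>z'\<in>Z. \<forall>c. norm (C s z c - C s z' c) \<le> LZ * norm (z - z')"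
    and LZ_pos: "LZ > 0"
    and sigma: "lam < \<sigma>" "\<sigma> < 1"
    and eta0: "\<eta>0 > 0"
    and w: "0 \<le> w" "w < omega_bar R lam LA LC LZ \<sigma>"
    and z0: "z0 \<in> Z"
    and prob: "prob_space M"
    and subalg: "\<forall>k s. subalgebra M (F k s)"
    and hist_meas: "\<forall>k. \<forall>s\<in>{1..R}. \<forall>i.
        (\<lambda>\<omega>. qm_input A C R (Qf \<omega>) z0 k s $ i) \<in> borel_measurable (F k s)"
    and z_meas: "\<forall>k. (\<lambda>\<omega>. qm_z A C R (Qf \<omega>) z0 k) \<in> borel_measurable M"
    and BC: "\<forall>k. \<forall>s\<in>{1..R}. \<forall>i. \<forall>X \<in> borel_measurable (F k s).
        (\<lambda>\<omega>. Q k s i \<omega> (X \<omega>)) \<in> borel_measurable M \<and>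
        (AE \<omega> in M. nn_cond_exp M (F k s)
            (\<lambda>\<omega>'. ennreal ((norm (Q k s i \<omega>' (X \<omega>') - X \<omega>'))^2)) \<omega>
          \<le> ennreal ((sqrt (real CARD('d)) * (\<eta>0 * \<sigma>^k) + w * norm (X \<omega>))^2))"
  shows "\<forall>k. (\<integral>\<^sup>+ \<omega>. ennreal ((norm (qm_z A C R (Qf \<omega>) z0 k - zinf))^2) \<partial>M)
      \<le> ennreal ((
          (max ((1 / LZ) * Max ((\<lambda>s. norm (C s z0 0)) ` {1..R})) (nrm (z0 - zinf))
           + (LA * psi R LC * sqrt (real (CARD('m) * CARD('d))) * (real R)^2 * \<eta>0 / (\<sigma> - lam))
             * ((1 + (real R * w / \<sigma>) * ((1 + LC * \<sigma>) * psi R LC - 1))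
                / (1 - w / omega_bar R lam LA LC LZ \<sigma>)))
          * \<sigma>^k)^2)"
proof -
  interpret prob_space M by (rule prob)
  note nrmN = A1_norm(1)
  define zz where "zz k \<omega> = qm_z A C R (Qf \<omega>) z0 k" for k \<omega>
  define xx where "xx k s \<omega> = qm_input A C R (Qf \<omega>) z0 k s" for k s \<omega>
  define hh where "hh k \<omega> s = hq A C R (Qf \<omega>) z0 k s" for k \<omega> s
  define u where "u k \<omega> = nrm (zz k \<omega> - zinf)" for k \<omega>
  define xn where "xn k s \<omega> = norm (xx k s \<omega>)" for k s \<omega>
  define en where "en k s \<omega> = norm (eq A C R (Qf \<omega>) z0 k s)" for k s \<omega>
  define \<epsilon>0 where "\<epsilon>0 = sqrt (real (CARD('m) * CARD('d))) * \<eta>0"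
  define \<psi> where "\<psi> = psi R LC"
  define \<beta> where "\<beta> = max 1 (2 * LC)"
  define Mx where "Mx = Max ((\<lambda>s. norm (C s z0 0)) ` {1..R})"
  define G where "G = max ((1 / LZ) * Mx) (nrm (z0 - zinf))"
  define ob where "ob = omega_bar R lam LA LC LZ \<sigma>"
  define V0 where "V0 = G + (LA * \<psi> * sqrt (real (CARD('m) * CARD('d))) * (real R)^2 * \<eta>0 / (\<sigma> - lam))
             * ((1 + (real R * w / \<sigma>) * ((1 + LC * \<sigma>) * \<psi> - 1)) / (1 - w / ob))"
  define W where "W = (2 * LZ * V0 + \<epsilon>0 * (1 + LC * \<sigma>)) / (\<sigma> - real R * w)"
  have G0: "G \<ge> 0" unfolding G_def using nrm_nonneg[OF nrmN] by (simp add: le_max_iff_disj)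
  have sq0: "sqrt (real (CARD('m) * CARD('d))) \<ge> 0" by simp
  note cf = const_facts[of R lam \<sigma> LA LC LZ w G "sqrt (real (CARD('m) * CARD('d)))" \<eta>0,
      OF R A1_lam(1) sigma A2(1) A3(1) LZ_pos w G0 sq0 eta0,
      folded \<psi>_def ob_def, folded V0_def, folded \<epsilon>0_def, folded W_def]
  have sRw: "\<sigma> - real R * w > 0" and W0: "W \<ge> 0" and VG: "V0 \<ge> G" and w1: "w \<le> 1" and e0: "\<epsilon>0 \<ge> 0"
    and c2: "LZ * V0 + LC * \<epsilon>0 \<le> W"
    and c3: "LZ * V0 * (1 + \<sigma>) + LC * \<epsilon>0 * \<sigma> + \<epsilon>0 + real R * w * W \<le> W * \<sigma>"
    and c4: "lam * V0 + LA * (real R)^2 * \<psi> * (\<epsilon>0 + w * (real R * W)) \<le> \<sigma> * V0"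
    using cf by auto
  have sp: "\<sigma> > 0" using A1_lam sigma by simp
  have V0p: "V0 \<ge> 0" using VG G0 by simp
  have b1: "\<beta> \<ge> 1" unfolding \<beta>_def by simp
  have LCb: "LC \<le> \<beta>" unfolding \<beta>_def using A3(1) by simp
  have LCwb: "LC * (1 + w) \<le> \<beta>"
  proof -
    have "LC * (1 + w) \<le> LC * 2" by (rule mult_left_mono) (use w1 A3(1) in auto)
    then show ?thesis unfolding \<beta>_def by simp
  qed
  have psib: "\<psi> = \<beta>^(R-1)" unfolding \<psi>_def \<beta>_def by (rule psi_beta[OF A3(1)])
  have zZ: "zz k \<omega> \<in> Z" for k \<omega> unfolding zz_def by (rule qm_z_in[OF A_maps z0])
  have umeas: "u k \<in> borel_measurable M" for k
    unfolding u_def zz_def by (rule nrm_measurable[OF nrmN]) (use z_meas in blast)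
  have xmeas: "xn k s \<in> borel_measurable M" if "s \<in> {1..R}" for k s
  proof -
    have "(\<lambda>\<omega>. xx k s \<omega> $ i) \<in> borel_measurable M" for i
      using measurable_from_subalg[OF subalg[rule_format] hist_meas[rule_format, OF that]] unfolding xx_def .
    then have "(\<lambda>\<omega>. norm (xx k s \<omega> $ i)) \<in> borel_measurable M" for i by measurable
    then show ?thesis unfolding xn_def by (rule vec_norm_meas)
  qed
  have ebnd: "bnd M (en k s) (\<epsilon>0 * \<sigma>^k + w * b)" if s: "s \<in> {1..R}" and xb: "bnd M (xn k s) b" for k s b
  proof -
    have Xm: "\<forall>i. (\<lambda>\<omega>. xx k s \<omega> $ i) \<in> borel_measurable (F k s)"
      using hist_meas s unfolding xx_def by blast
    have BCks: "\<forall>i. \<forall>X \<in> borel_measurable (F k s). (\<lambda>\<omega>. Q k s i \<omega> (X \<omega>)) \<in> borel_measurable M \<and>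
        (AE \<omega> in M. nn_cond_exp M (F k s) (\<lambda>\<omega>'. ennreal ((norm (Q k s i \<omega>' (X \<omega>') - X \<omega>'))^2)) \<omega>
          \<le> ennreal ((sqrt (real CARD('d)) * (\<eta>0 * \<sigma>^k) + w * norm (X \<omega>))^2))"
      using BC s by blast
    have "bnd M (\<lambda>\<omega>. norm (blockQ (\<lambda>i. Q k s i \<omega>) (xx k s \<omega>) - xx k s \<omega>))
        (sqrt (real (CARD('m) * CARD('d))) * (\<eta>0 * \<sigma>^k) + w * b)"
      by (rule bc_bound[OF prob subalg[rule_format] Xm BCks xb[unfolded xn_def]]) (use eta0 sp w in auto)
    moreover have "(\<lambda>\<omega>. norm (blockQ (\<lambda>i. Q k s i \<omega>) (xx k s \<omega>) - xx k s \<omega>)) = en k s"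
      unfolding en_def xx_def eq_def Qf_def by simp
    ultimately show ?thesis unfolding \<epsilon>0_def by (simp add: mult.assoc)
  qed
  define XB where "XB k s = \<beta>^(s-1) * (real s * W) * \<sigma>^k" for k s
  define EB where "EB k s = (\<epsilon>0 + w * (\<beta>^(s-1) * (real s * W))) * \<sigma>^k" for k s
  have ebnd2: "bnd M (en k s) (EB k s)" if "s \<in> {1..R}" "bnd M (xn k s) (XB k s)" for k s
  proof -
    have "bnd M (en k s) (\<epsilon>0 * \<sigma>^k + w * XB k s)" by (rule ebnd[OF that])
    moreover have "\<epsilon>0 * \<sigma>^k + w * XB k s = EB k s" unfolding XB_def EB_def by (simp add: algebra_simps)
    ultimately show ?thesis by simp
  qed
  have unonneg: "0 \<le> u k \<omega>" for k \<omega> unfolding u_def by (rule nrm_nonneg[OF nrmN])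
  have zdiff: "norm (zz (Suc k) \<omega> - zz k \<omega>) \<le> u (Suc k) \<omega> + u k \<omega>" for k \<omega>
  proof -
    have "norm (zz (Suc k) \<omega> - zz k \<omega>) \<le> norm (zz (Suc k) \<omega> - zinf) + norm (zz k \<omega> - zinf)"
      by (metis norm_diff_triangle_le norm_minus_commute order_refl)
    also have "\<dots> \<le> u (Suc k) \<omega> + u k \<omega>" unfolding u_def using A1_norm(2) by (intro add_mono) auto
    finally show ?thesis .
  qed
  have ustep: "bnd M (u (Suc k)) (V0 * \<sigma>^(Suc k))"
    if hu: "bnd M (u k) (V0 * \<sigma>^k)" and hx: "\<forall>s\<in>{1..R}. bnd M (xn k s) (XB k s)" for k
  proof -
    have eb: "bnd M (en k t) (EB k t)" if "t \<in> {1..R}" for t using ebnd2 hx that by blast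
    have pw: "u (Suc k) \<omega> \<le> lam * u k \<omega> + LA * (\<Sum>s\<in>{1..R}. \<Sum>t\<in>{1..s}. LC^(s-t) * en k t \<omega>)" for \<omega>
    proof -
      have zk: "qm_z A C R (Qf \<omega>) z0 k \<in> Z" using zZ unfolding zz_def .
      have "u (Suc k) \<omega> \<le> lam * u k \<omega> + LA * (\<Sum>s\<in>{1..R}. norm (hq A C R (Qf \<omega>) z0 k s - cseq C (qm_z A C R (Qf \<omega>) z0 k) s))"
        unfolding u_def zz_def by (rule D2[OF nrmN A2(2) A1_contr zk])
      also have "\<dots> \<le> lam * u k \<omega> + LA * (\<Sum>s\<in>{1..R}. \<Sum>t\<in>{1..s}. LC^(s-t) * en k t \<omega>)"
        unfolding en_def
        by (intro add_left_mono mult_left_mono sum_mono D3[OF A3(3) A3(1) zk]) (use A2(1) in auto)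
      finally show ?thesis .
    qed
    have b: "bnd M (\<lambda>\<omega>. lam * u k \<omega> + LA * (\<Sum>s\<in>{1..R}. \<Sum>t\<in>{1..s}. LC^(s-t) * en k t \<omega>))
         (lam * (V0 * \<sigma>^k) + LA * (\<Sum>s\<in>{1..R}. \<Sum>t\<in>{1..s}. LC^(s-t) * EB k t))"
      by (intro bnd_add bnd_scale bnd_sum prob eb hu) (use A1_lam A2(1) A3(1) in auto)
    have bu: "bnd M (u (Suc k)) (lam * (V0 * \<sigma>^k) + LA * (\<Sum>s\<in>{1..R}. \<Sum>t\<in>{1..s}. LC^(s-t) * EB k t))"
      by (rule bnd_dom[OF umeas unonneg pw b])
    have "(\<Sum>s\<in>{1..R}. \<Sum>t\<in>{1..s}. LC^(s-t) * EB k t) \<le> (real R)^2 * \<beta>^(R-1) * (\<epsilon>0 + w * (real R * W)) * \<sigma>^k"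
      unfolding EB_def by (rule unum[OF A3(1) LCb b1 e0 w(1) W0]) (use sp in simp)
    then have "lam * (V0 * \<sigma>^k) + LA * (\<Sum>s\<in>{1..R}. \<Sum>t\<in>{1..s}. LC^(s-t) * EB k t)
        \<le> lam * (V0 * \<sigma>^k) + LA * ((real R)^2 * \<psi> * (\<epsilon>0 + w * (real R * W)) * \<sigma>^k)"
      unfolding psib using A2(1) by (intro add_left_mono mult_left_mono) auto
    also have "\<dots> = (lam * V0 + LA * (real R)^2 * \<psi> * (\<epsilon>0 + w * (real R * W))) * \<sigma>^k"
      by (simp add: algebra_simps)
    also have "\<dots> \<le> (\<sigma> * V0) * \<sigma>^k" by (rule mult_right_mono[OF c4]) (use sp in simp)
    also have "\<dots> = V0 * \<sigma>^(Suc k)" by simp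
    finally show ?thesis by (rule bnd_mono_bound[OF bu])
  qed
  have hq0: "hh k \<omega> 0 = 0" for k \<omega> unfolding hh_def by (rule hq_0)
  have Mx: "norm (C s z0 0) \<le> LZ * V0" if "s \<in> {1..R}" for s
  proof -
    have "norm (C s z0 0) \<le> Mx" unfolding Mx_def using that by (intro Max_ge) auto
    also have "Mx = LZ * ((1 / LZ) * Mx)" using LZ_pos by simp
    also have "\<dots> \<le> LZ * V0" using VG LZ_pos unfolding G_def by (intro mult_left_mono) auto
    finally show ?thesis .
  qed
  have xstep: "\<forall>s\<in>{1..R}. bnd M (xn (Suc k) s) (XB (Suc k) s)"
    if hu': "bnd M (u (Suc k)) (V0 * \<sigma>^(Suc k))" and hu: "bnd M (u k) (V0 * \<sigma>^k)"
      and hx: "\<forall>s\<in>{1..R}. bnd M (xn k s) (XB k s)" for k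
  proof -
    have eb: "bnd M (en k t) (EB k t)" if "t \<in> {1..R}" for t using ebnd2 hx that by blast
    have pw: "xn (Suc k) (Suc s') \<omega> \<le> LZ * (u (Suc k) \<omega> + u k \<omega>) + LC * norm (hh (Suc k) \<omega> s' - hh k \<omega> s') + en k (Suc s') \<omega>"
      if "Suc s' \<in> {1..R}" for s' \<omega>
    proof -
      have "xn (Suc k) (Suc s') \<omega> \<le> LZ * norm (zz (Suc k) \<omega> - zz k \<omega>) + LC * norm (hh (Suc k) \<omega> s' - hh k \<omega> s') + en k (Suc s') \<omega>"
        unfolding xn_def xx_def zz_def hh_def en_def
        using D4[OF A3(3) A3(4) zZ[unfolded zz_def] zZ[unfolded zz_def] that] by simp
      also have "\<dots> \<le> LZ * (u (Suc k) \<omega> + u k \<omega>) + LC * norm (hh (Suc k) \<omega> s' - hh k \<omega> s') + en k (Suc s') \<omega>"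
        using zdiff A3(2) by (simp add: mult_left_mono)
      finally show ?thesis .
    qed
    have "Suc s' \<le> R \<longrightarrow> bnd M (xn (Suc k) (Suc s')) (XB (Suc k) (Suc s'))" for s'
    proof (induction s')
      case 0
      show ?case
      proof
        assume R1: "Suc 0 \<le> R"
        have pw0: "xn (Suc k) (Suc 0) \<omega> \<le> LZ * (u (Suc k) \<omega> + u k \<omega>) + en k (Suc 0) \<omega>" for \<omega>
          using pw[of 0 \<omega>] R1 by (simp add: hq0)
        have b: "bnd M (\<lambda>\<omega>. LZ * (u (Suc k) \<omega> + u k \<omega>) + en k (Suc 0) \<omega>) (LZ * (V0 * \<sigma>^(Suc k) + V0 * \<sigma>^k) + EB k (Suc 0))"
          by (intro bnd_add bnd_scale hu' hu eb) (use A3(2) R1 in auto)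
        have bx: "bnd M (xn (Suc k) (Suc 0)) (LZ * (V0 * \<sigma>^(Suc k) + V0 * \<sigma>^k) + EB k (Suc 0))"
          by (rule bnd_dom[OF xmeas _ pw0 b]) (use R1 in \<open>auto simp: xn_def\<close>)
        have "LZ * (V0 * \<sigma>^(Suc k) + V0 * \<sigma>^k) + EB k (Suc 0) \<le> XB (Suc k) (Suc 0)"
        proof -
          have wW: "w * W \<le> real R * w * W" using R1 w(1) W0 by (simp add: mult_right_mono mult_le_cancel_right1)
          have LCe: "0 \<le> LC * \<epsilon>0 * \<sigma>" using A3(1) e0 sp by simp
          have "LZ * V0 * (1 + \<sigma>) + \<epsilon>0 + w * W \<le> W * \<sigma>" using c3 wW LCe by linarith
          then have "(LZ * V0 * (1 + \<sigma>) + \<epsilon>0 + w * W) * \<sigma>^k \<le> (W * \<sigma>) * \<sigma>^k"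
            by (rule mult_right_mono) (use sp in simp)
          then show ?thesis unfolding XB_def EB_def by (simp add: algebra_simps)
        qed
        then show "bnd M (xn (Suc k) (Suc 0)) (XB (Suc k) (Suc 0))" by (rule bnd_mono_bound[OF bx])
      qed
    next
      case (Suc s')
      show ?case
      proof
        assume R2: "Suc (Suc s') \<le> R"
        have IH: "bnd M (xn (Suc k) (Suc s')) (XB (Suc k) (Suc s'))" using Suc R2 by simp
        have e1: "bnd M (en (Suc k) (Suc s')) (EB (Suc k) (Suc s'))" by (rule ebnd2) (use R2 IH in auto)
        have pw2: "xn (Suc k) (Suc (Suc s')) \<omega> \<le> LZ * (u (Suc k) \<omega> + u k \<omega>)
            + LC * (xn (Suc k) (Suc s') \<omega> + en (Suc k) (Suc s') \<omega>) + en k (Suc (Suc s')) \<omega>" for \<omega>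
        proof -
          have "norm (hh (Suc k) \<omega> (Suc s') - hh k \<omega> (Suc s')) \<le> xn (Suc k) (Suc s') \<omega> + en (Suc k) (Suc s') \<omega>"
            unfolding hh_def xn_def en_def xx_def hq_diff_Suc by (rule norm_triangle_ineq)
          then show ?thesis using pw[of "Suc s'" \<omega>] R2 A3(1)
            by (smt (verit) atLeastAtMost_iff mult_left_mono le_add1 plus_1_eq_Suc)
        qed
        have b: "bnd M (\<lambda>\<omega>. LZ * (u (Suc k) \<omega> + u k \<omega>) + LC * (xn (Suc k) (Suc s') \<omega> + en (Suc k) (Suc s') \<omega>) + en k (Suc (Suc s')) \<omega>)
            (LZ * (V0 * \<sigma>^(Suc k) + V0 * \<sigma>^k) + LC * (XB (Suc k) (Suc s') + EB (Suc k) (Suc s')) + EB k (Suc (Suc s')))"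
          by (intro bnd_add bnd_scale hu' hu eb IH e1) (use A3(1,2) R2 in auto)
        have bx: "bnd M (xn (Suc k) (Suc (Suc s'))) (LZ * (V0 * \<sigma>^(Suc k) + V0 * \<sigma>^k) + LC * (XB (Suc k) (Suc s') + EB (Suc k) (Suc s')) + EB k (Suc (Suc s')))"
          by (rule bnd_dom[OF xmeas _ pw2 b]) (use R2 in \<open>auto simp: xn_def\<close>)
        have "LZ * (V0 * \<sigma>^(Suc k) + V0 * \<sigma>^k) + LC * (XB (Suc k) (Suc s') + EB (Suc k) (Suc s')) + EB k (Suc (Suc s'))
            \<le> XB (Suc k) (Suc (Suc s'))"
        proof -
          have P1: "\<beta> * \<beta>^s' \<ge> 1" using one_le_power[OF b1, of "Suc s'"] by simp
          have sR: "real (Suc s') + 1 \<le> real R" using R2 by simp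
          have "LZ * (V0 * (\<sigma> * \<sigma>^k) + V0 * \<sigma>^k) + LC * (\<beta>^s' * (real (Suc s') * W) * (\<sigma> * \<sigma>^k)
                + (\<epsilon>0 + w * (\<beta>^s' * (real (Suc s') * W))) * (\<sigma> * \<sigma>^k))
             + (\<epsilon>0 + w * ((\<beta> * \<beta>^s') * ((real (Suc s') + 1) * W))) * \<sigma>^k
             \<le> (\<beta> * \<beta>^s') * ((real (Suc s') + 1) * W) * (\<sigma> * \<sigma>^k)"
            by (rule xnum[OF P1 _ A3(2) V0p _ _ A3(1) _ W0 e0 w(1) LCwb sR c3]) (use b1 sp in auto)
          then show ?thesis unfolding XB_def EB_def by (simp add: add.commute)
        qed
        then show "bnd M (xn (Suc k) (Suc (Suc s'))) (XB (Suc k) (Suc (Suc s')))" by (rule bnd_mono_bound[OF bx])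
      qed
    qed
    then show ?thesis by (metis atLeastAtMost_iff not0_implies_Suc not_one_le_zero)
  qed
  have xbase: "\<forall>s\<in>{1..R}. bnd M (xn 0 s) (XB 0 s)"
  proof -
    have pw: "xn 0 (Suc s') \<omega> \<le> LZ * V0 + LC * norm (hh 0 \<omega> s')" if "Suc s' \<in> {1..R}" for s' \<omega>
    proof -
      have "xn 0 (Suc s') \<omega> \<le> norm (C (Suc s') z0 0) + LC * norm (hh 0 \<omega> s')"
        unfolding xn_def xx_def hh_def using D5[OF A3(3) z0 that] by simp
      then show ?thesis using Mx[OF that] by linarith
    qed
    have "Suc s' \<le> R \<longrightarrow> bnd M (xn 0 (Suc s')) (XB 0 (Suc s'))" for s'
    proof (induction s')
      case 0
      show ?case
      proof
        assume R1: "Suc 0 \<le> R"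
        have pw0: "xn 0 (Suc 0) \<omega> \<le> LZ * V0" for \<omega> using pw[of 0 \<omega>] R1 by (simp add: hq0)
        have bx: "bnd M (xn 0 (Suc 0)) (LZ * V0)"
          by (rule bnd_dom[OF xmeas _ pw0 bnd_const[OF prob]]) (use R1 A3(2) V0p in \<open>auto simp: xn_def\<close>)
        have "LZ * V0 \<le> XB 0 (Suc 0)" unfolding XB_def using c2 mult_nonneg_nonneg[OF A3(1) e0] by simp
        then show "bnd M (xn 0 (Suc 0)) (XB 0 (Suc 0))" by (rule bnd_mono_bound[OF bx])
      qed
    next
      case (Suc s')
      show ?case
      proof
        assume R2: "Suc (Suc s') \<le> R"
        have IH: "bnd M (xn 0 (Suc s')) (XB 0 (Suc s'))" using Suc R2 by simp
        have e1: "bnd M (en 0 (Suc s')) (EB 0 (Suc s'))" by (rule ebnd2) (use R2 IH in auto)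
        have pw2: "xn 0 (Suc (Suc s')) \<omega> \<le> LZ * V0 + LC * (xn 0 (Suc s') \<omega> + en 0 (Suc s') \<omega>)" for \<omega>
        proof -
          have "norm (hh 0 \<omega> (Suc s')) \<le> xn 0 (Suc s') \<omega> + en 0 (Suc s') \<omega>"
            unfolding hh_def xn_def en_def xx_def hq0_Suc by (rule norm_triangle_ineq)
          then show ?thesis using pw[of "Suc s'" \<omega>] R2 A3(1)
            by (smt (verit) atLeastAtMost_iff mult_left_mono le_add1 plus_1_eq_Suc)
        qed
        have b: "bnd M (\<lambda>\<omega>. LZ * V0 + LC * (xn 0 (Suc s') \<omega> + en 0 (Suc s') \<omega>))
            (LZ * V0 + LC * (XB 0 (Suc s') + EB 0 (Suc s')))"
          by (intro bnd_add bnd_scale bnd_const prob IH e1) (use A3(1,2) V0p in auto)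
        have bx: "bnd M (xn 0 (Suc (Suc s'))) (LZ * V0 + LC * (XB 0 (Suc s') + EB 0 (Suc s')))"
          by (rule bnd_dom[OF xmeas _ pw2 b]) (use R2 in \<open>auto simp: xn_def\<close>)
        have "LZ * V0 + LC * (XB 0 (Suc s') + EB 0 (Suc s')) \<le> XB 0 (Suc (Suc s'))"
        proof -
          have P1: "\<beta> * \<beta>^s' \<ge> 1" using one_le_power[OF b1, of "Suc s'"] by simp
          have "LZ * V0 + LC * (\<beta>^s' * (real (Suc s') * W) + (\<epsilon>0 + w * (\<beta>^s' * (real (Suc s') * W))))
             \<le> (\<beta> * \<beta>^s') * ((real (Suc s') + 1) * W)"
            by (rule x0num[OF P1 _ A3(2) V0p A3(1) _ W0 e0 w(1) LCwb c2]) (use b1 in auto)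
          then show ?thesis unfolding XB_def EB_def by (simp add: add.commute)
        qed
        then show "bnd M (xn 0 (Suc (Suc s'))) (XB 0 (Suc (Suc s')))" by (rule bnd_mono_bound[OF bx])
      qed
    qed
    then show ?thesis by (metis atLeastAtMost_iff not0_implies_Suc not_one_le_zero)
  qed
  have claim: "bnd M (u k) (V0 * \<sigma>^k) \<and> (\<forall>s\<in>{1..R}. bnd M (xn k s) (XB k s))" for k
  proof (induction k)
    case 0
    have "u 0 = (\<lambda>\<omega>. nrm (z0 - zinf))" unfolding u_def zz_def by (simp add: qm_z_0)
    moreover have "bnd M (\<lambda>\<omega>. nrm (z0 - zinf)) (nrm (z0 - zinf))" by (rule bnd_const[OF prob nrm_nonneg[OF nrmN]])
    moreover have "nrm (z0 - zinf) \<le> V0 * \<sigma>^0" using VG unfolding G_def by simp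
    ultimately have "bnd M (u 0) (V0 * \<sigma>^0)" using bnd_mono_bound by metis
    then show ?case using xbase by simp
  next
    case (Suc k)
    have u': "bnd M (u (Suc k)) (V0 * \<sigma>^(Suc k))" using ustep Suc by blast
    then show ?case using xstep[OF u'] Suc by blast
  qed
  show ?thesis
  proof
    fix k
    have "l2 M (u k) \<le> ennreal ((V0 * \<sigma>^k)^2)" using claim[of k] unfolding bnd_def by blast
    moreover have "(\<integral>\<^sup>+ \<omega>. ennreal ((norm (qm_z A C R (Qf \<omega>) z0 k - zinf))^2) \<partial>M) \<le> l2 M (u k)"
      unfolding l2_def u_def zz_def
      by (intro nn_integral_mono ennreal_leI power_mono) (use A1_norm(2) in auto)
    ultimately have "(\<integral>\<^sup>+ \<omega>. ennreal ((norm (qm_z A C R (Qf \<omega>) z0 k - zinf))^2) \<partial>M) \<le> ennreal ((V0 * \<sigma>^k)^2)"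
      by (rule order_trans[rotated])
    then show "(\<integral>\<^sup>+ \<omega>. ennreal ((norm (qm_z A C R (Qf \<omega>) z0 k - zinf))^2) \<partial>M)
      \<le> ennreal ((
          (max ((1 / LZ) * Max ((\<lambda>s. norm (C s z0 0)) ` {1..R})) (nrm (z0 - zinf))
           + (LA * psi R LC * sqrt (real (CARD('m) * CARD('d))) * (real R)^2 * \<eta>0 / (\<sigma> - lam))
             * ((1 + (real R * w / \<sigma>) * ((1 + LC * \<sigma>) * psi R LC - 1))
                / (1 - w / omega_bar R lam LA LC LZ \<sigma>)))
          * \<sigma>^k)^2)"
      unfolding V0_def G_def Mx_def \<psi>_def ob_def .
  qed
qed


end
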